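(* Let $C=p_r\dots p_s$ be a configuration of g-2PATH of Type II having free left hand, with $r<0$. Let $j_0$ be the smallest integer $j$ with $0\le j\le s$ such that $W(r,j)$ is finite. Then $C$ satisfies the condition of noninterference of extensions (CNI) if and only if $\mathrm{NI}(r+1,j_0)$ holds.
   Context: Positions are elements of $\mathbb{Z}^2$; with $\epsilon_0=(1,0),\epsilon_1=(0,1),\epsilon_2=(-1,0),\epsilon_3=(0,-1)$, positions $p,p'$ are adjacent if $p'-p$ is some $\epsilon_i$. A configuration of g-2PATH is a sequence $C=p_r\dots p_s$ ($r\le0\le s$) of positions with $p_0=(0,0)$, consecutive positions adjacent, all positions distinct, and $p_l,p_m$ not adjacent whenever $|l-m|\ge2$. For $p\in C$, $\mathrm{bc}_C(p)=(b_0,\dots,b_3)$ with $b_i=1$ iff $p+\epsilon_i\in C$. For $r\le i\le0\le j\le s$: $W(i,j)$ is the set of pairs $(x_0,x_1)$ of finite, possibly empty, sequences of positions such that $x_0p_i\dots p_jx_1$ is a configuration $C'$ of g-2PATH (general at $p_0$) with $\mathrm{bc}_{C'}(p_l)=\mathrm{bc}_C(p_l)$ for $i\le l\le j$; $U(i,j)$, $V(i,j)$ are the sets of first, resp. second, components of its elements; $f(i,j)=\sup\{|x_0|:x_0\in U(i,j)\}$, $g(i,j)=\sup\{|x_1|:x_1\in V(i,j)\}$ (possibly $\infty$). $\mathrm{NI}(i,j)$ means $W(i,j)=U(i,j)\times V(i,j)$. $I=\{(i,j): r\le i-1,\ W(i,j)$ infinite, $W(i-1,j)$ finite$\}$, $J=\{(i,j):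 j+1\le s,\ W(i,j)$ infinite, $W(i,j+1)$ finite$\}$, $K=\{(i,j): W(i,j)$ finite$\}$. $C$ satisfies CNI if $\mathrm{NI}(i,j)$ holds for all $(i,j)\in I\cup J\cup K$. The left hand of $C$ is free if $r=0$ or ($r<0$ and $f(r+1,s)=\infty$), closed otherwise; the right hand is free if $s=0$ or ($s>0$ and $g(r,s-1)=\infty$), closed otherwise. $C$ is of Type II if exactly one hand is free. *)

theory Defs
  imports Main "HOL-Library.Extended_Nat"
begin

type_synonym pos = "int \<times> int"

definition eps :: "nat \<Rightarrow> pos" where
  "eps k = (if k = 0 then (1,0) else if k = 1 then (0,1) else if k = 2 then (-1,0) else (0,-1))"

definition padd :: "pos \<Rightarrow> pos \<Rightarrow> pos" where
  "padd p q = (fst p + fst q, snd p + snd q)"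

definition adjacent :: "pos \<Rightarrow> pos \<Rightarrow> bool" where
  "adjacent p p' \<longleftrightarrow> (\<exists>k<4. p' = padd p (eps k))"

definition path_ok :: "pos list \<Rightarrow> bool" where
  "path_ok xs \<longleftrightarrow> distinct xs
     \<and> (\<forall>k. Suc k < length xs \<longrightarrow> adjacent (xs ! k) (xs ! Suc k))
     \<and> (\<forall>l m. l < length xs \<longrightarrow> m < length xs \<longrightarrow> l + 2 \<le> m \<longrightarrow> \<not> adjacent (xs ! l) (xs ! m))"

definition seg :: "(int \<Rightarrow> pos) \<Rightarrow> int \<Rightarrow> int \<Rightarrow> pos list" where
  "seg p i j = map p [i..j]"

definition config :: "int \<Rightarrow> int \<Rightarrow> (int \<Rightarrow> pos) \<Rightarrow> bool" where
  "config r s p \<longleftrightarrow> r \<le> 0 \<and> 0 \<le> s \<and> p 0 = (0,0) \<and> path_ok (seg p r s)"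

definition bc :: "pos set \<Rightarrow> pos \<Rightarrow> bool list" where
  "bc S q = map (\<lambda>k. padd q (eps k) \<in> S) [0..<4]"

text \<open>W(i,j) for the configuration p_r ... p_s. Since i \<le> 0 \<le> j, the sequence
  x0 p_i ... p_j x1 (indexed so that p_0 keeps index 0) is a configuration
  iff it satisfies the path conditions.\<close>
definition W :: "int \<Rightarrow> int \<Rightarrow> (int \<Rightarrow> pos) \<Rightarrow> int \<Rightarrow> int \<Rightarrow> (pos list \<times> pos list) set" where
  "W r s p i j = {(x0, x1). path_ok (x0 @ seg p i j @ x1)
      \<and> (\<forall>l\<in>{i..j}. bc (set (x0 @ seg p i j @ x1)) (p l) = bc (set (seg p r s)) (p l))}"

definition U :: "int \<Rightarrow> int \<Rightarrow> (int \<Rightarrow> pos) \<Rightarrow> int \<Rightarrow> int \<Rightarrow> pos list set" where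
  "U r s p i j = fst ` W r s p i j"

definition V :: "int \<Rightarrow> int \<Rightarrow> (int \<Rightarrow> pos) \<Rightarrow> int \<Rightarrow> int \<Rightarrow> pos list set" where
  "V r s p i j = snd ` W r s p i j"

definition f :: "int \<Rightarrow> int \<Rightarrow> (int \<Rightarrow> pos) \<Rightarrow> int \<Rightarrow> int \<Rightarrow> enat" where
  "f r s p i j = Sup ((\<lambda>x. enat (length x)) ` U r s p i j)"

definition g :: "int \<Rightarrow> int \<Rightarrow> (int \<Rightarrow> pos) \<Rightarrow> int \<Rightarrow> int \<Rightarrow> enat" where
  "g r s p i j = Sup ((\<lambda>x. enat (length x)) ` V r s p i j)"

definition NI :: "int \<Rightarrow> int \<Rightarrow> (int \<Rightarrow> pos) \<Rightarrow> int \<Rightarrow> int \<Rightarrow> bool" where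
  "NI r s p i j \<longleftrightarrow> W r s p i j = U r s p i j \<times> V r s p i j"

definition Iset :: "int \<Rightarrow> int \<Rightarrow> (int \<Rightarrow> pos) \<Rightarrow> (int \<times> int) set" where
  "Iset r s p = {(i,j). r \<le> i - 1 \<and> i \<le> 0 \<and> 0 \<le> j \<and> j \<le> s
      \<and> infinite (W r s p i j) \<and> finite (W r s p (i - 1) j)}"

definition Jset :: "int \<Rightarrow> int \<Rightarrow> (int \<Rightarrow> pos) \<Rightarrow> (int \<times> int) set" where
  "Jset r s p = {(i,j). r \<le> i \<and> i \<le> 0 \<and> 0 \<le> j \<and> j + 1 \<le> s
      \<and> infinite (W r s p i j) \<and> finite (W r s p i (j + 1))}"

definition Kset :: "int \<Rightarrow> int \<Rightarrow> (int \<Rightarrow> pos) \<Rightarrow> (int \<times> int) set" where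
  "Kset r s p = {(i,j). r \<le> i \<and> i \<le> 0 \<and> 0 \<le> j \<and> j \<le> s \<and> finite (W r s p i j)}"

definition CNI :: "int \<Rightarrow> int \<Rightarrow> (int \<Rightarrow> pos) \<Rightarrow> bool" where
  "CNI r s p \<longleftrightarrow> (\<forall>(i,j) \<in> Iset r s p \<union> Jset r s p \<union> Kset r s p. NI r s p i j)"

definition left_free :: "int \<Rightarrow> int \<Rightarrow> (int \<Rightarrow> pos) \<Rightarrow> bool" where
  "left_free r s p \<longleftrightarrow> r = 0 \<or> (r < 0 \<and> f r s p (r + 1) s = \<infinity>)"

definition right_free :: "int \<Rightarrow> int \<Rightarrow> (int \<Rightarrow> pos) \<Rightarrow> bool" where
  "right_free r s p \<longleftrightarrow> s = 0 \<or> (s > 0 \<and> g r s p r (s - 1) = \<infinity>)"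

definition type_II :: "int \<Rightarrow> int \<Rightarrow> (int \<Rightarrow> pos) \<Rightarrow> bool" where
  "type_II r s p \<longleftrightarrow> (left_free r s p \<noteq> right_free r s p)"

end

theory Submission
  imports Defs
begin

lemma adj_sym: "adjacent p q \<Longrightarrow> adjacent q p"
  unfolding adjacent_def
proof -
  assume "\<exists>k<4. q = padd p (eps k)"
  then obtain k where k: "k < 4" "q = padd p (eps k)" by blast
  have "k = 0 \<or> k = 1 \<or> k = 2 \<or> k = 3" using k by auto
  then show "\<exists>k<4. p = padd q (eps k)"
  proof (elim disjE)
    assume "k = 0" then show ?thesis using k
      by (intro exI[of _ 2]) (auto simp: padd_def eps_def)
  next
    assume "k = 1" then show ?thesis using k
      by (intro exI[of _ 3]) (auto simp: padd_def eps_def)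
  next
    assume "k = 2" then show ?thesis using k
      by (intro exI[of _ 0]) (auto simp: padd_def eps_def)
  next
    assume "k = 3" then show ?thesis using k
      by (intro exI[of _ 1]) (auto simp: padd_def eps_def)
  qed
qed

lemma adj_irrefl: "\<not> adjacent p p"
  unfolding adjacent_def padd_def eps_def by (auto simp: prod_eq_iff)

lemma adj_eps: "k < 4 \<Longrightarrow> adjacent q (padd q (eps k))"
  unfolding adjacent_def by blast

lemma pok_adj:
  assumes "path_ok xs" "a < length xs" "b < length xs" "adjacent (xs!a) (xs!b)"
  shows "a = Suc b \<or> b = Suc a"
proof -
  have ne: "a \<noteq> b" using assms(4) adj_irrefl by metis
  have 1: "\<not> (a + 2 \<le> b)" using assms unfolding path_ok_def by blast
  have 2: "\<not> (b + 2 \<le> a)" using assms adj_sym[OF assms(4)] unfolding path_ok_def by blast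
  show ?thesis using ne 1 2 by linarith
qed

lemma bc_nth: "k < 4 \<Longrightarrow> bc S q ! k = (padd q (eps k) \<in> S)"
  unfolding bc_def by simp

lemma bc_eqD: "bc S q = bc T q \<Longrightarrow> k < 4 \<Longrightarrow> (padd q (eps k) \<in> S) = (padd q (eps k) \<in> T)"
  by (metis bc_nth)

lemma bc_prefix:
  assumes "path_ok (A @ B)" "c < length B" "1 \<le> c"
  shows "bc (set (A @ B)) (B ! c) = bc (set B) (B ! c)"
  unfolding bc_def
proof (rule map_cong[OF refl])
  fix k assume "k \<in> set [0..<4]"
  hence k: "k < 4" by simp
  let ?q = "padd (B ! c) (eps k)"
  have "?q \<notin> set A"
  proof
    assume "?q \<in> set A"
    then obtain a where a: "a < length A" "A ! a = ?q" by (auto simp: in_set_conv_nth)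
    have e1: "(A @ B) ! a = ?q" using a by (simp add: nth_append)
    have e2: "(A @ B) ! (length A + c) = B ! c" by (simp add: nth_append)
    have "adjacent ((A @ B) ! (length A + c)) ((A @ B) ! a)" using e1 e2 adj_eps[OF k] by simp
    from pok_adj[OF assms(1) _ _ this] a assms(2,3) show False by auto
  qed
  then show "(?q \<in> set (A @ B)) = (?q \<in> set B)" by auto
qed

lemma seg_split:
  assumes "i' \<le> i" "i \<le> j" "j \<le> j'"
  shows "seg p i' j' = seg p i' (i - 1) @ seg p i j @ seg p (j + 1) j'"
proof -
  have "[i'..j'] = [i'..i-1] @ [i..j']" using assms by (intro upto_split1) auto
  also have "[i..j'] = [i..j] @ [j+1..j']" using assms by (intro upto_split2) auto
  finally show ?thesis unfolding seg_def by simp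
qed

lemma W_shrink:
  assumes "(x0, x1) \<in> W r s p i' j'" "i' \<le> i" "i \<le> j" "j \<le> j'"
  shows "(x0 @ seg p i' (i - 1), seg p (j + 1) j' @ x1) \<in> W r s p i j"
proof -
  have "\<forall>l\<in>{i'..j'}. bc (set (x0 @ seg p i' j' @ x1)) (p l) = bc (set (seg p r s)) (p l)"
    "path_ok (x0 @ seg p i' j' @ x1)" using assms(1) unfolding W_def by auto
  then show ?thesis using assms(2-4) seg_split[OF assms(2-4), of p] unfolding W_def
    by (auto simp: Un_assoc)
qed


lemma seg_nth: "i + int n \<le> j \<Longrightarrow> seg p i j ! n = p (i + int n)"
  unfolding seg_def by simp

lemma seg_len: "length (seg p i j) = nat (j - i + 1)"
  unfolding seg_def by simp

lemma W_left_empty: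
  assumes c: "config r s p" and r: "r < 0" and j: "0 \<le> j" and m: "(x0, x1) \<in> W r s p r j"
  shows "x0 = []"
proof (rule ccontr)
  assume ne: "x0 \<noteq> []"
  define n where "n = length x0"
  define L where "L = x0 @ seg p r j @ x1"
  have n0: "n > 0" using ne n_def by auto
  have pl: "path_ok L" and bcr: "bc (set L) (p r) = bc (set (seg p r s)) (p r)"
    using m r j unfolding W_def L_def by auto
  have sl: "length (seg p r j) = nat (j - r + 1)" by (simp add: seg_len)
  have lenL: "Suc n < length L" using sl r j unfolding L_def n_def by simp
  have L1: "L ! (n - 1) = last x0" using ne n0 unfolding L_def n_def
    by (simp add: nth_append last_conv_nth)
  have L2: "L ! n = p r" using r j sl unfolding L_def n_def
    by (simp add: nth_append seg_nth[of r 0 j, simplified])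
  have L3: "L ! Suc n = p (r + 1)" using r j sl unfolding L_def n_def
    by (simp add: nth_append seg_nth[of r 1 j, simplified])
  have "adjacent (L ! (n - 1)) (L ! Suc (n - 1))"
    using pl lenL n0 unfolding path_ok_def by (metis Suc_diff_1 Suc_lessD)
  hence "adjacent (p r) (last x0)" using L1 L2 n0 adj_sym by auto
  then obtain k where k: "k < 4" "last x0 = padd (p r) (eps k)" unfolding adjacent_def by blast
  have "last x0 \<in> set L" using ne unfolding L_def by simp
  hence "last x0 \<in> set (seg p r s)" using bc_eqD[OF bcr k(1)] k(2) by simp
  then obtain m where mm: "m < length (seg p r s)" "seg p r s ! m = last x0"
    by (auto simp: in_set_conv_nth)
  have ps: "path_ok (seg p r s)" and s: "0 \<le> s" using c unfolding config_def by auto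
  have s0: "seg p r s ! 0 = p r" using r s seg_nth[of r 0 s] by simp
  have lens: "length (seg p r s) = nat (s - r + 1)" by (simp add: seg_len)
  have "adjacent (seg p r s ! 0) (seg p r s ! m)" using s0 mm(2) k adj_eps by simp
  from pok_adj[OF ps _ mm(1) this] lens r s have "m = 1" by auto
  hence "last x0 = p (r + 1)" using mm(2) seg_nth[of r 1 s p] r s by simp
  hence "L ! (n - 1) = L ! Suc n" using L1 L3 by simp
  moreover have "distinct L" using pl unfolding path_ok_def by simp
  ultimately have "n - 1 = Suc n" using lenL by (simp add: nth_eq_iff_index_eq)
  thus False by simp
qed


lemma W_right_empty:
  assumes c: "config r s p" and r: "r < 0" and m: "(x0, x1) \<in> W r s p r s"
  shows "x1 = []"
proof (rule ccontr)
  assume ne: "x1 \<noteq> []"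
  have ps: "path_ok (seg p r s)" and s: "0 \<le> s" using c unfolding config_def by auto
  define n where "n = length x0"
  define N where "N = nat (s - r + 1)"
  define L where "L = x0 @ seg p r s @ x1"
  have N2: "N \<ge> 2" using r s N_def by auto
  have sl: "length (seg p r s) = N" by (simp add: seg_len N_def)
  have pl: "path_ok L" and bcr: "bc (set L) (p s) = bc (set (seg p r s)) (p s)"
    using m r s unfolding W_def L_def by auto
  have lenL: "n + N < length L" using sl ne unfolding L_def n_def by simp
  have sN1: "seg p r s ! (N - 1) = p s" using seg_nth[of r "N - 1" s p] N2 N_def by simp
  have sN2: "seg p r s ! (N - 2) = p (s - 1)" using seg_nth[of r "N - 2" s p] N2 N_def by simp
  have L1: "L ! (n + N) = hd x1" using ne sl unfolding L_def n_def
    by (simp add: nth_append hd_conv_nth)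
  have L2: "L ! (n + N - 1) = p s"
  proof -
    have "n + N - 1 = length x0 + (N - 1)" using N2 n_def by simp
    hence "L ! (n + N - 1) = (seg p r s @ x1) ! (N - 1)" unfolding L_def
      by (metis append_assoc nth_append_length_plus)
    also have "\<dots> = seg p r s ! (N - 1)" using N2 sl by (simp add: nth_append)
    finally show ?thesis using sN1 by simp
  qed
  have L3: "L ! (n + N - 2) = p (s - 1)"
  proof -
    have "n + N - 2 = length x0 + (N - 2)" using N2 n_def by simp
    hence "L ! (n + N - 2) = (seg p r s @ x1) ! (N - 2)" unfolding L_def
      by (metis append_assoc nth_append_length_plus)
    also have "\<dots> = seg p r s ! (N - 2)" using N2 sl by (simp add: nth_append)
    finally show ?thesis using sN2 by simp
  qed
  have "adjacent (L ! (n + N - 1)) (L ! Suc (n + N - 1))"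
    using pl lenL N2 unfolding path_ok_def by (metis Suc_diff_1 add_gr_0 zero_less_numeral less_le_trans)
  hence "adjacent (p s) (hd x1)" using L1 L2 N2 by auto
  then obtain k where k: "k < 4" "hd x1 = padd (p s) (eps k)" unfolding adjacent_def by blast
  have "hd x1 \<in> set L" using ne unfolding L_def by simp
  hence "hd x1 \<in> set (seg p r s)" using bc_eqD[OF bcr k(1)] k(2) by simp
  then obtain m where mm: "m < N" "seg p r s ! m = hd x1"
    using sl by (auto simp: in_set_conv_nth)
  have "adjacent (seg p r s ! (N - 1)) (seg p r s ! m)" using sN1 mm(2) k adj_eps by simp
  from pok_adj[OF ps _ _ this] mm(1) N2 sl have "m = N - 2" by auto
  hence "hd x1 = p (s - 1)" using mm(2) sN2 by simp
  hence "L ! (n + N - 2) = L ! (n + N)" using L1 L3 by simp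
  moreover have "distinct L" using pl unfolding path_ok_def by simp
  ultimately have "n + N - 2 = n + N" using lenL by (simp add: nth_eq_iff_index_eq)
  thus False using N2 by simp
qed

lemma W_rs_finite:
  assumes c: "config r s p" and r: "r < 0"
  shows "finite (W r s p r s)"
proof -
  have s: "0 \<le> s" using c unfolding config_def by auto
  have "W r s p r s \<subseteq> {([], [])}"
    using W_left_empty[OF c r s] W_right_empty[OF c r] by auto
  thus ?thesis by (rule finite_subset) simp
qed

lemma NI_r:
  assumes c: "config r s p" and r: "r < 0" and j: "0 \<le> j"
  shows "NI r s p r j"
  unfolding NI_def U_def V_def
proof
  show "W r s p r j \<subseteq> fst ` W r s p r j \<times> snd ` W r s p r j" by force
  show "fst ` W r s p r j \<times> snd ` W r s p r j \<subseteq> W r s p r j"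
  proof clarify
    fix a b a' b' a'' b''
    assume "(a', b') \<in> W r s p r j" "(a'', b'') \<in> W r s p r j"
    moreover have "a' = []" "a'' = []" using W_left_empty[OF c r j] calculation by blast+
    ultimately show "(fst (a', b'), snd (a'', b'')) \<in> W r s p r j" by simp
  qed
qed


lemma Sup_finite_not_inf:
  assumes "finite (A :: enat set)" "\<forall>a\<in>A. a \<noteq> \<infinity>"
  shows "Sup A \<noteq> \<infinity>"
proof (cases "A = {}")
  case True then show ?thesis by (simp add: Sup_enat_def)
next
  case False
  then have "Max A \<in> A" using assms(1) by simp
  then show ?thesis using assms False by (simp add: Sup_enat_def)
qed

lemma W_inf:
  assumes lf: "left_free r s p" and r: "r < 0"
    and i: "r + 1 \<le> i" "i \<le> 0" and j: "0 \<le> j" "j \<le> s"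
  shows "infinite (W r s p i j)"
proof
  assume fin: "finite (W r s p i j)"
  define h where "h = (\<lambda>(x0::pos list, x1::pos list). (x0 @ seg p (r + 1) (i - 1), seg p (j + 1) s @ x1))"
  have "h ` W r s p (r + 1) s \<subseteq> W r s p i j"
    using W_shrink[of _ _ r s p "r + 1" s i j] i j unfolding h_def by auto
  hence "finite (h ` W r s p (r + 1) s)" using fin finite_subset by blast
  moreover have "inj_on h (W r s p (r + 1) s)" unfolding h_def inj_on_def by auto
  ultimately have "finite (W r s p (r + 1) s)" using finite_imageD by blast
  hence "finite ((\<lambda>x. enat (length x)) ` U r s p (r + 1) s)" unfolding U_def by simp
  hence "f r s p (r + 1) s \<noteq> \<infinity>" unfolding f_def
    by (intro Sup_finite_not_inf) auto
  thus False using lf r unfolding left_free_def by simp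
qed

lemma NI_prop:
  assumes ni: "NI r s p (r + 1) j0" and r: "r < 0" and j: "0 \<le> j0" "j0 \<le> j"
  shows "NI r s p (r + 1) j"
  unfolding NI_def U_def V_def
proof
  show "W r s p (r + 1) j \<subseteq> fst ` W r s p (r + 1) j \<times> snd ` W r s p (r + 1) j" by force
  show "fst ` W r s p (r + 1) j \<times> snd ` W r s p (r + 1) j \<subseteq> W r s p (r + 1) j"
  proof clarify
    fix a b1 a1 b
    assume m1: "(a, b1) \<in> W r s p (r + 1) j" and m2: "(a1, b) \<in> W r s p (r + 1) j"
    let ?T = "seg p (j0 + 1) j"
    have e: "seg p (r + 1) r = []" unfolding seg_def by simp
    have "(a, ?T @ b1) \<in> W r s p (r + 1) j0"
      using W_shrink[OF m1, of "r + 1" j0] r j e by simp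
    moreover have "(a1, ?T @ b) \<in> W r s p (r + 1) j0"
      using W_shrink[OF m2, of "r + 1" j0] r j e by simp
    ultimately have "(a, ?T @ b) \<in> U r s p (r + 1) j0 \<times> V r s p (r + 1) j0"
      unfolding U_def V_def by force
    hence m3: "(a, ?T @ b) \<in> W r s p (r + 1) j0" using ni unfolding NI_def by simp
    have sp: "seg p (r + 1) j = seg p (r + 1) j0 @ ?T"
      using seg_split[of "r + 1" "r + 1" j0 j p] r j e by simp
    have po: "path_ok (a @ seg p (r + 1) j @ b)"
      and bc0: "\<forall>l\<in>{r + 1..j0}. bc (set (a @ seg p (r + 1) j @ b)) (p l) = bc (set (seg p r s)) (p l)"
      using m3 sp unfolding W_def by auto
    have po2: "path_ok (a1 @ seg p (r + 1) j @ b)"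
      and bc2: "\<forall>l\<in>{r + 1..j}. bc (set (a1 @ seg p (r + 1) j @ b)) (p l) = bc (set (seg p r s)) (p l)"
      using m2 unfolding W_def by auto
    have "\<forall>l\<in>{r + 1..j}. bc (set (a @ seg p (r + 1) j @ b)) (p l) = bc (set (seg p r s)) (p l)"
    proof
      fix l assume l: "l \<in> {r + 1..j}"
      show "bc (set (a @ seg p (r + 1) j @ b)) (p l) = bc (set (seg p r s)) (p l)"
      proof (cases "l \<le> j0")
        case True then show ?thesis using bc0 l by auto
      next
        case False
        define c where "c = nat (l - (r + 1))"
        define B where "B = seg p (r + 1) j @ b"
        have c1: "1 \<le> c" using False j r c_def by auto
        have cl: "c < length B" using l c_def unfolding B_def by (simp add: seg_len) linarith
        have Bc: "B ! c = p l" using l c_def unfolding B_def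
          by (simp add: nth_append seg_len seg_nth)
        have "bc (set (a @ B)) (B ! c) = bc (set B) (B ! c)"
          using bc_prefix[of a B c] po cl c1 unfolding B_def by simp
        also have "\<dots> = bc (set (a1 @ B)) (B ! c)"
          using bc_prefix[of a1 B c] po2 cl c1 unfolding B_def by simp
        also have "\<dots> = bc (set (seg p r s)) (p l)" using bc2 l Bc unfolding B_def by simp
        finally show ?thesis using Bc unfolding B_def by simp
      qed
    qed
    thus "(fst (a, b1), snd (a1, b)) \<in> W r s p (r + 1) j" using po unfolding W_def by simp
  qed
qed


theorem theorem11:
  fixes r s :: int and p :: "int \<Rightarrow> int \<times> int"
  assumes "config r s p"
    and "type_II r s p"
    and "left_free r s p"
    and "r < 0"
  shows "CNI r s p \<longleftrightarrow>
           NI r s p (r + 1) (LEAST j. 0 \<le> j \<and> j \<le> s \<and> finite (W r s p r j))"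
proof -
  note c = assms(1) and lf = assms(3) and r = assms(4)
  define j0 where "j0 = (LEAST j. 0 \<le> j \<and> j \<le> s \<and> finite (W r s p r j))"
  have s: "0 \<le> s" using c unfolding config_def by auto
  have ex: "0 \<le> s \<and> s \<le> s \<and> finite (W r s p r s)" using s W_rs_finite[OF c r] by simp
  define S where "S = {j. 0 \<le> j \<and> j \<le> s \<and> finite (W r s p r j)}"
  have Sfin: "finite S" unfolding S_def by (rule finite_subset[of _ "{0..s}"]) auto
  have Sne: "s \<in> S" using ex unfolding S_def by simp
  have MS: "Min S \<in> S" using Sfin Sne by (intro Min_in) auto
  have Mle: "\<And>j. j \<in> S \<Longrightarrow> Min S \<le> j" using Sfin by simp
  have "j0 = Min S" unfolding j0_def
    by (rule Least_equality) (use MS Mle in \<open>auto simp: S_def\<close>)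
  hence j0: "0 \<le> j0 \<and> j0 \<le> s \<and> finite (W r s p r j0)" and
    j0le: "\<And>j. 0 \<le> j \<Longrightarrow> j \<le> s \<Longrightarrow> finite (W r s p r j) \<Longrightarrow> j0 \<le> j"
    using MS Mle unfolding S_def by auto
  have "CNI r s p \<longleftrightarrow> NI r s p (r + 1) j0"
  proof
    assume cni: "CNI r s p"
    have "(r + 1, j0) \<in> Iset r s p \<union> Jset r s p \<union> Kset r s p"
    proof (cases "finite (W r s p (r + 1) j0)")
      case True then show ?thesis using j0 r unfolding Kset_def by auto
    next
      case False then show ?thesis using j0 r unfolding Iset_def by auto
    qed
    thus "NI r s p (r + 1) j0" using cni unfolding CNI_def by auto
  next
    assume ni: "NI r s p (r + 1) j0"
    show "CNI r s p" unfolding CNI_def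
    proof clarify
      fix i j assume mem: "(i, j) \<in> Iset r s p \<union> Jset r s p \<union> Kset r s p"
      have ri: "r \<le> i" "i \<le> 0" "0 \<le> j" "j \<le> s" using mem unfolding Iset_def Jset_def Kset_def by auto
      show "NI r s p i j"
      proof (cases "i = r")
        case True then show ?thesis using NI_r[OF c r ri(3)] by simp
      next
        case False
        hence i1: "r + 1 \<le> i" using ri by simp
        have notK: "(i, j) \<notin> Kset r s p" using W_inf[OF lf r i1 ri(2-4)] unfolding Kset_def by auto
        have notJ: "(i, j) \<notin> Jset r s p" using W_inf[OF lf r i1 ri(2), of "j + 1"] ri
          unfolding Jset_def by auto
        hence iI: "(i, j) \<in> Iset r s p" using mem notK by auto
        have ieq: "i = r + 1"
        proof (rule ccontr)
          assume "i \<noteq> r + 1"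
          hence "r + 1 \<le> i - 1" using i1 by simp
          thus False using W_inf[OF lf r _ _ ri(3,4), of "i - 1"] iI ri unfolding Iset_def by auto
        qed
        have "finite (W r s p r j)" using iI ieq unfolding Iset_def by auto
        hence "j0 \<le> j" using j0le ri by simp
        thus ?thesis using NI_prop[OF ni r] j0 ieq by simp
      qed
    qed
  qed
  thus ?thesis unfolding j0_def .
qed

end
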